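(* The category $\mathsf{HSLat}$ does not satisfy normality of unions: there exist a Heyting semilattice $A$ and sub-Heyting semilattices $X\le B\le A$, $X\le C\le A$ such that $X$ is a normal subobject of $B$ and of $C$, but $X$ is not a normal subobject of the join $B\vee C$ in $A$. (For instance $A=C_4\times C_4$ with $C_4=\{0<1<2<3\}$, $X=\{(2,2),(3,3)\}$, $B=\{(0,1),(2,2),(3,3)\}$, $C=\{(1,0),(2,2),(3,3)\}$.) Consequently, normalisers do not exist in general in $\mathsf{HSLat}$.
   Context: A Heyting semilattice is a meet-semilattice with top $1$ and an operation $\Rightarrow$ with $x\wedge y\le z$ iff $x\le y\Rightarrow z$; morphisms preserve $1,\wedge,\Rightarrow$. A finite chain is a Heyting semilattice, and products are computed componentwise. A normal subobject is a kernel; in $\mathsf{HSLat}$ the normal subobjects of $A$ are exactly the filters of $A$ (non-empty, closed under $\wedge$, up-closed). A semi-abelian category satisfies normality of unions if, whenever $X\le B\le A$ and $X\le C\le A$ are subobjects with $X$ normal in both $B$ and $C$, then $X$ is normal in the join $B\vee C$ of subobjects of $A$. The normaliser of a subobject $X\le A$ is the largest subobject of $A$ in which $X$ is normal. *)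

theory Defs
  imports Main
begin

record 'a hsl =
  carrier :: "'a set"
  meet :: "'a \<Rightarrow> 'a \<Rightarrow> 'a"
  imp :: "'a \<Rightarrow> 'a \<Rightarrow> 'a"
  top :: 'a

definition hsl_le :: "('a, 'b) hsl_scheme \<Rightarrow> 'a \<Rightarrow> 'a \<Rightarrow> bool" where
  "hsl_le A x y \<longleftrightarrow> meet A x y = x"

definition heyting_semilattice :: "('a, 'b) hsl_scheme \<Rightarrow> bool" where
  "heyting_semilattice A \<longleftrightarrow>
     top A \<in> carrier A \<and>
     (\<forall>x\<in>carrier A. \<forall>y\<in>carrier A. meet A x y \<in> carrier A \<and> imp A x y \<in> carrier A) \<and>
     (\<forall>x\<in>carrier A. meet A x x = x) \<and>
     (\<forall>x\<in>carrier A. \<forall>y\<in>carrier A. meet A x y = meet A y x) \<and>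
     (\<forall>x\<in>carrier A. \<forall>y\<in>carrier A. \<forall>z\<in>carrier A.
        meet A (meet A x y) z = meet A x (meet A y z)) \<and>
     (\<forall>x\<in>carrier A. meet A x (top A) = x) \<and>
     (\<forall>x\<in>carrier A. \<forall>y\<in>carrier A. \<forall>z\<in>carrier A.
        hsl_le A (meet A x y) z \<longleftrightarrow> hsl_le A x (imp A y z))"

definition subalg :: "('a, 'b) hsl_scheme \<Rightarrow> 'a set \<Rightarrow> bool" where
  "subalg A S \<longleftrightarrow> S \<subseteq> carrier A \<and> top A \<in> S \<and>
     (\<forall>x\<in>S. \<forall>y\<in>S. meet A x y \<in> S \<and> imp A x y \<in> S)"

definition join_sub :: "('a, 'b) hsl_scheme \<Rightarrow> 'a set \<Rightarrow> 'a set \<Rightarrow> 'a set" where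
  "join_sub A B C = \<Inter>{S. subalg A S \<and> B \<union> C \<subseteq> S}"

text \<open>X is a filter of the subalgebra S (i.e. X is a normal subobject of S).\<close>
definition filter_in :: "('a, 'b) hsl_scheme \<Rightarrow> 'a set \<Rightarrow> 'a set \<Rightarrow> bool" where
  "filter_in A S X \<longleftrightarrow> X \<subseteq> S \<and> X \<noteq> {} \<and>
     (\<forall>x\<in>X. \<forall>y\<in>X. meet A x y \<in> X) \<and>
     (\<forall>x\<in>X. \<forall>y\<in>S. hsl_le A x y \<longrightarrow> y \<in> X)"

definition is_normaliser :: "('a, 'b) hsl_scheme \<Rightarrow> 'a set \<Rightarrow> 'a set \<Rightarrow> bool" where
  "is_normaliser A X N \<longleftrightarrow> subalg A N \<and> filter_in A N X \<and>
     (\<forall>M. subalg A M \<and> filter_in A M X \<longrightarrow> M \<subseteq> N)"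

end

theory Submission
  imports Defs
begin

definition ci :: "nat \<Rightarrow> nat \<Rightarrow> nat" where
  "ci x y = (if x \<le> y then 3 else y)"

definition A4 :: "(nat \<times> nat) hsl" where
  "A4 = \<lparr> carrier = {..3} \<times> {..3},
          meet = (\<lambda>p q. (min (fst p) (fst q), min (snd p) (snd q))),
          imp = (\<lambda>p q. (ci (fst p) (fst q), ci (snd p) (snd q))),
          top = (3, 3) \<rparr>"

lemma le_A4: "hsl_le A4 p q \<longleftrightarrow> fst p \<le> fst q \<and> snd p \<le> snd q"
  by (cases p; cases q) (auto simp: hsl_le_def A4_def min_def)

lemma ci_adj: "min x y \<le> (z::nat) \<longleftrightarrow> x \<le> ci y z" if "x \<le> 3" "z \<le> 3"
  using that by (auto simp: ci_def min_def)

lemma adj_A4: "hsl_le A4 (meet A4 x y) z \<longleftrightarrow> hsl_le A4 x (imp A4 y z)"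
  if "x \<in> carrier A4" "y \<in> carrier A4" "z \<in> carrier A4"
proof -
  obtain a b c d e f where xyz: "x = (a,b)" "y = (c,d)" "z = (e,f)"
    by (cases x; cases y; cases z) auto
  hence "a \<le> 3" "b \<le> 3" "e \<le> 3" "f \<le> 3"
    using that by (auto simp: A4_def)
  note xyz this
  thus ?thesis unfolding le_A4 by (simp add: A4_def ci_def min_def)
qed

lemma hs_A4: "heyting_semilattice A4"
  unfolding heyting_semilattice_def using adj_A4
  by (auto simp: A4_def ci_def min_def)

definition X0 :: "(nat \<times> nat) set" where "X0 = {(2,2),(3,3)}"
definition B0 :: "(nat \<times> nat) set" where "B0 = {(0,1),(2,2),(3,3)}"
definition C0 :: "(nat \<times> nat) set" where "C0 = {(1,0),(2,2),(3,3)}"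

lemma sX: "subalg A4 X0" by (auto simp: subalg_def A4_def X0_def ci_def)
lemma sB: "subalg A4 B0" by (auto simp: subalg_def A4_def B0_def ci_def)
lemma sC: "subalg A4 C0" by (auto simp: subalg_def A4_def C0_def ci_def)
lemma fB: "filter_in A4 B0 X0" unfolding filter_in_def le_A4 by (auto simp: A4_def B0_def X0_def)
lemma fC: "filter_in A4 C0 X0" unfolding filter_in_def le_A4 by (auto simp: A4_def C0_def X0_def)

lemma XB: "X0 \<subseteq> B0" by (simp add: X0_def B0_def)
lemma XC: "X0 \<subseteq> C0" by (simp add: X0_def C0_def)

lemma key: assumes "subalg A4 S" "B0 \<union> C0 \<subseteq> S" shows "(2,3) \<in> S"
proof -
  have cl: "\<And>x y. x \<in> S \<Longrightarrow> y \<in> S \<Longrightarrow> imp A4 x y \<in> S"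
    using assms(1) unfolding subalg_def by blast
  have a: "(0,1) \<in> S" "(1,0) \<in> S" "(2,2) \<in> S" using assms(2) by (auto simp: B0_def C0_def)
  have "imp A4 (0,1) (1,0) \<in> S" by (rule cl) (rule a)+
  hence b: "(3,0) \<in> S" by (simp add: A4_def ci_def)
  have "imp A4 (3,0) (2,2) \<in> S" by (rule cl) (rule b, rule a)
  thus ?thesis by (simp add: A4_def ci_def)
qed

lemma join_in: "(2,3) \<in> join_sub A4 B0 C0"
  unfolding join_sub_def using key by blast

lemma notf: "\<not> filter_in A4 M X0" if "(2,3) \<in> M"
proof
  assume "filter_in A4 M X0"
  hence "\<forall>x\<in>X0. \<forall>y\<in>M. hsl_le A4 x y \<longrightarrow> y \<in> X0" unfolding filter_in_def by blast
  moreover have "(2,2) \<in> X0" "hsl_le A4 (2,2) (2,3)" by (auto simp: X0_def le_A4)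
  ultimately have "(2,3) \<in> X0" using that by blast
  thus False by (simp add: X0_def)
qed

theorem mainTheorem5:
  shows "(\<exists>(A :: (nat \<times> nat) hsl) X B C.
            heyting_semilattice A \<and> subalg A X \<and> subalg A B \<and> subalg A C \<and>
            X \<subseteq> B \<and> X \<subseteq> C \<and> filter_in A B X \<and> filter_in A C X \<and>
            \<not> filter_in A (join_sub A B C) X)
       \<and> (\<exists>(A :: (nat \<times> nat) hsl) X.
            heyting_semilattice A \<and> subalg A X \<and> \<not> (\<exists>N. is_normaliser A X N))"
proof
  show "\<exists>(A :: (nat \<times> nat) hsl) X B C.
            heyting_semilattice A \<and> subalg A X \<and> subalg A B \<and> subalg A C \<and>
            X \<subseteq> B \<and> X \<subseteq> C \<and> filter_in A B X \<and> filter_in A C X \<and>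
            \<not> filter_in A (join_sub A B C) X"
    apply (rule exI[of _ A4], rule exI[of _ X0], rule exI[of _ B0], rule exI[of _ C0])
    using hs_A4 sX sB sC fB fC notf[OF join_in] XB XC by blast
  show "\<exists>(A :: (nat \<times> nat) hsl) X.
            heyting_semilattice A \<and> subalg A X \<and> \<not> (\<exists>N. is_normaliser A X N)"
  proof (rule exI[of _ A4], rule exI[of _ X0], intro conjI hs_A4 sX notI)
    assume "\<exists>N. is_normaliser A4 X0 N"
    then obtain N where N: "is_normaliser A4 X0 N" by blast
    hence "B0 \<subseteq> N" "C0 \<subseteq> N" "subalg A4 N" "filter_in A4 N X0"
      using sB sC fB fC unfolding is_normaliser_def by auto
    hence "(2,3) \<in> N" using key by blast
    thus False using notf \<open>filter_in A4 N X0\<close> by blast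
  qed
qed

end
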